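(* Let $k\ge4$ be even and $\alpha\ge1$ an integer, and let $G=C(\alpha,\alpha+1,\alpha+2,\dots,\alpha+k-1)$. Then $\omega(G)=a(G)$ $(=\alpha+k-1)$.
   Context: $C(\alpha_1,\dots,\alpha_k)$ is defined recursively by $C(\alpha_1)=\overline{K_{\alpha_1}}$ (edgeless graph) and $C(\alpha_1,\dots,\alpha_i)=\overline{C(\alpha_1,\dots,\alpha_{i-1})\cup K_{\alpha_i}}$ for $i=2,\dots,k$ (disjoint union, then complement). Equivalently for $k$ even, with $\pi_i$ the $\alpha_i$ vertices introduced at step $i$: $\pi_i$ is a clique for $i$ odd, independent for $i$ even, and for $i<j$ vertices of $\pi_i,\pi_j$ are adjacent iff $j$ is even. $\omega(G)$ is the clique number; $a(G)$ is the second smallest eigenvalue of the Laplacian $L=D-A$. *)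

theory Defs
  imports "Jordan_Normal_Form.Char_Poly" "HOL-Library.Multiset" "HOL-Library.Product_Lexorder"
begin

text \<open>Simple graphs on vertices of type nat \<times> nat: a vertex (i, j) is the j-th vertex
  introduced at step i+1 of the construction (steps are 0-indexed here).\<close>

definition Cverts :: "nat list \<Rightarrow> (nat \<times> nat) set" where
  "Cverts as = {(i, j). i < length as \<and> j < as ! i}"

text \<open>Recursive construction, on the reversed list of sizes:
  C(a_1) is edgeless; C(a_1..a_i) = complement of (C(a_1..a_{i-1}) disjoint-union K_{a_i}).
  The newest block in the reversed list a # rest has index length rest.\<close>
fun Cadj_rev :: "nat list \<Rightarrow> nat \<times> nat \<Rightarrow> nat \<times> nat \<Rightarrow> bool" where
  "Cadj_rev [] u v = False"
| "Cadj_rev [a] u v = False"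
| "Cadj_rev (a # b # rest) u v =
     (u \<noteq> v \<and> u \<in> Cverts (rev (a # b # rest)) \<and> v \<in> Cverts (rev (a # b # rest)) \<and>
      \<not> (Cadj_rev (b # rest) u v \<or>
         (fst u = length (b # rest) \<and> fst v = length (b # rest))))"

definition Cadj :: "nat list \<Rightarrow> nat \<times> nat \<Rightarrow> nat \<times> nat \<Rightarrow> bool" where
  "Cadj as = Cadj_rev (rev as)"

definition clique_number :: "'v set \<Rightarrow> ('v \<Rightarrow> 'v \<Rightarrow> bool) \<Rightarrow> nat" where
  "clique_number V E = Max (card ` {S. S \<subseteq> V \<and> (\<forall>u\<in>S. \<forall>v\<in>S. u \<noteq> v \<longrightarrow> E u v)})"

definition laplacian :: "'v::linorder set \<Rightarrow> ('v \<Rightarrow> 'v \<Rightarrow> bool) \<Rightarrow> real mat" where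
  "laplacian V E = (let vs = sorted_list_of_set V; n = length vs in
     mat n n (\<lambda>(i, j). if i = j then real (card {w \<in> V. E (vs ! i) w})
                       else if E (vs ! i) (vs ! j) then -1 else 0))"

definition laplacian_eigenvalues :: "'v::linorder set \<Rightarrow> ('v \<Rightarrow> 'v \<Rightarrow> bool) \<Rightarrow> real list" where
  "laplacian_eigenvalues V E = sorted_list_of_multiset (proots (char_poly (laplacian V E)))"

definition alg_conn :: "'v::linorder set \<Rightarrow> ('v \<Rightarrow> 'v \<Rightarrow> bool) \<Rightarrow> real" where
  "alg_conn V E = laplacian_eigenvalues V E ! 1"

end

theory Submission
  imports Defs
begin


lemma Cverts_snoc: "Cverts (xs @ [a]) = Cverts xs \<union> {(length xs, j) | j. j < a}"
  unfolding Cverts_def by (auto simp: nth_append less_Suc_eq)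

lemma Cadj_rev_char:
  assumes "r \<noteq> []"
  shows "Cadj_rev r u v \<longleftrightarrow> u \<noteq> v \<and> u \<in> Cverts (rev r) \<and> v \<in> Cverts (rev r) \<and>
     (if fst u = fst v then even (length r - fst u) else odd (length r - max (fst u) (fst v)))"
  using assms
proof (induction r u v rule: Cadj_rev.induct)
  case (1 u v) then show ?case by simp
next
  case (2 a u v)
  then show ?case by (auto simp: Cverts_def)
next
  case (3 a b rest u v)
  have IH: "Cadj_rev (b # rest) u v \<longleftrightarrow> u \<noteq> v \<and> u \<in> Cverts (rev (b#rest)) \<and> v \<in> Cverts (rev (b#rest)) \<and>
     (if fst u = fst v then even (length (b#rest) - fst u) else odd (length (b#rest) - max (fst u) (fst v)))"
    using 3 by simp
  have CV: "Cverts (rev (a#b#rest)) = Cverts (rev (b#rest)) \<union> {(length (b#rest), j) | j. j < a}"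
    using Cverts_snoc[of "rev (b#rest)" a] by simp
  have lt: "w \<in> Cverts (rev (b#rest)) \<Longrightarrow> fst w < length (b#rest)" for w
    unfolding Cverts_def by auto
  show ?case
    unfolding Cadj_rev.simps(3) IH CV
    using lt[of u] lt[of v]
    by (cases u; cases v) (auto split: if_splits simp: max_def)
qed




lemma charpoly_eigbasis:
  fixes A P :: "real mat" and lam :: "nat \<Rightarrow> real"
  assumes A: "A \<in> carrier_mat n n" and P: "P \<in> carrier_mat n n"
    and AP: "A * P = P * mat n n (\<lambda>(i,j). if i = j then lam i else 0)"
    and dP: "det P \<noteq> 0"
  shows "char_poly A = (\<Prod>a\<leftarrow>map lam [0..<n]. [:- a, 1:])"
proof -
  define D where "D = mat n n (\<lambda>(i,j). if i = j then lam i else (0::real))"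
  have D: "D \<in> carrier_mat n n" unfolding D_def by simp
  from det_non_zero_imp_unit[OF P dP, of undefined]
  obtain Q where Q: "Q \<in> carrier_mat n n" "P * Q = 1\<^sub>m n" "Q * P = 1\<^sub>m n"
    unfolding Units_def ring_mat_def by auto
  have "A = A * (P * Q)" using A Q by simp
  also have "\<dots> = (A * P) * Q" using A P Q by (simp add: assoc_mult_mat)
  also have "\<dots> = P * D * Q" using AP D_def by simp
  finally have "similar_mat A D" using similar_matI[of A D P Q n] A D P Q by auto
  hence "char_poly A = char_poly D" by (rule char_poly_similar)
  also have "\<dots> = (\<Prod>a\<leftarrow>diag_mat D. [:- a, 1:])"
    by (rule char_poly_upper_triangular[OF D]) (auto simp: upper_triangular_def D_def)
  also have "diag_mat D = map lam [0..<n]"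
    unfolding D_def diag_mat_def by (simp add: list_eq_iff_nth_eq)
  finally show ?thesis .
qed

lemma proots_eig: "proots (\<Prod>a\<leftarrow>(xs::real list). [:- a, 1:]) = mset xs"
proof (induction xs)
  case (Cons a xs)
  have nz: "(\<Prod>a\<leftarrow>(xs::real list). [:- a, 1:]) \<noteq> 0" by (auto simp: prod_list_zero_iff)
  have "proots (\<Prod>a\<leftarrow>(a#xs). [:- a, 1:]) = proots [:- a, 1:] + proots (\<Prod>a\<leftarrow>xs. [:- a, 1:])"
    by (simp only: list.map prod_list.Cons, rule proots_mult) (use nz in auto)
  then show ?case using Cons by simp
qed simp

lemma sort_second:
  fixes \<Lambda> :: "'v \<Rightarrow> real"
  assumes d: "distinct vs" and v0: "v0 \<in> set vs" and v1: "v1 \<in> set vs" and ne: "v0 \<noteq> v1"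
    and l0: "\<Lambda> v0 \<le> m" and l1: "\<Lambda> v1 = m" and rest: "\<And>v. v \<in> set vs \<Longrightarrow> v \<noteq> v0 \<Longrightarrow> \<Lambda> v \<ge> m"
  shows "sort (map \<Lambda> vs) ! 1 = m"
proof -
  define rs where "rs = filter (\<lambda>v. v \<noteq> v0 \<and> v \<noteq> v1) vs"
  have ms: "mset vs = {#v0, v1#} + mset rs"
  proof -
    have "mset vs = mset (filter (\<lambda>v. v = v0 \<or> v = v1) vs) + mset rs"
      unfolding rs_def mset_filter by (rule trans[OF multiset_partition], simp)
    moreover have "mset (filter (\<lambda>v. v = v0 \<or> v = v1) vs) = {#v0, v1#}"
    proof -
      have "set (filter (\<lambda>v. v = v0 \<or> v = v1) vs) = {v0, v1}" using v0 v1 by auto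
      moreover have "distinct (filter (\<lambda>v. v = v0 \<or> v = v1) vs)" using d by simp
      ultimately show ?thesis using ne mset_set_set[of "filter (\<lambda>v. v = v0 \<or> v = v1) vs"]
        by simp
    qed
    ultimately show ?thesis by simp
  qed
  let ?ys = "\<Lambda> v0 # m # sort (map \<Lambda> rs)"
  have "sort (map \<Lambda> vs) = ?ys"
  proof (rule properties_for_sort)
    show "mset ?ys = mset (map \<Lambda> vs)" using ms l1 by (simp add: mset_map)
    have "\<forall>x\<in>set rs. \<Lambda> x \<ge> m" using rest unfolding rs_def by auto
    then show "sorted ?ys" using l0 by (auto)
  qed
  then show ?thesis by simp
qed




lemma sum_nth_distinct:
  assumes "distinct vs"
  shows "(\<Sum>t<length vs. g (vs ! t)) = sum g (set vs)"
proof -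
  have inj: "inj_on ((!) vs) {..<length vs}" using assms by (simp add: inj_on_def nth_eq_iff_index_eq)
  have "set vs = (!) vs ` {..<length vs}" by (auto simp: in_set_conv_nth)
  then show ?thesis using sum.reindex[OF inj, of g] by simp
qed

lemma laplacian_spectrum:
  fixes V :: "'v::linorder set" and E :: "'v \<Rightarrow> 'v \<Rightarrow> bool" and F :: "'v \<Rightarrow> 'v \<Rightarrow> real"
    and \<Lambda> :: "'v \<Rightarrow> real"
  assumes fin: "finite V" and irr: "\<And>u. \<not> E u u"
    and eig: "\<And>u v. u \<in> V \<Longrightarrow> v \<in> V \<Longrightarrow> (\<Sum>w\<in>{w\<in>V. E u w}. F v u - F v w) = \<Lambda> v * F v u"
    and orth: "\<And>v v'. v \<in> V \<Longrightarrow> v' \<in> V \<Longrightarrow> v \<noteq> v' \<Longrightarrow> (\<Sum>w\<in>V. F v w * F v' w) = 0"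
    and nz: "\<And>v. v \<in> V \<Longrightarrow> F v v \<noteq> 0"
  shows "laplacian_eigenvalues V E = sort (map \<Lambda> (sorted_list_of_set V))"
proof -
  define vs where "vs = sorted_list_of_set V"
  define n where "n = length vs"
  have dvs: "distinct vs" and svs: "set vs = V" using fin unfolding vs_def by auto
  have vsV: "t < n \<Longrightarrow> vs ! t \<in> V" for t using svs unfolding n_def by auto
  have vsinj: "r < n \<Longrightarrow> t < n \<Longrightarrow> vs ! r = vs ! t \<longleftrightarrow> r = t" for r t
    using dvs unfolding n_def by (simp add: nth_eq_iff_index_eq)
  define A where "A = laplacian V E"
  have A: "A = mat n n (\<lambda>(i, j). if i = j then real (card {w \<in> V. E (vs ! i) w})
                       else if E (vs ! i) (vs ! j) then -1 else 0)"
    unfolding A_def laplacian_def vs_def n_def Let_def by simp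
  define P where "P = mat n n (\<lambda>(r,c). F (vs ! c) (vs ! r))"
  define lam where "lam = (\<lambda>c. \<Lambda> (vs ! c))"
  define D where "D = mat n n (\<lambda>(i,j). if i = j then lam i else (0::real))"
  have Ac: "A \<in> carrier_mat n n" and Pc: "P \<in> carrier_mat n n" and Dc: "D \<in> carrier_mat n n"
    unfolding A P_def D_def by auto
  define Lp where "Lp = (\<lambda>u w. if u = w then real (card {w \<in> V. E u w}) else if E u w then -1 else (0::real))"
  have Lrow: "(\<Sum>w\<in>V. Lp u w * F v w) = \<Lambda> v * F v u" if u: "u \<in> V" and v: "v \<in> V" for u v
  proof -
    have "(\<Sum>w\<in>V. Lp u w * F v w) = (\<Sum>w\<in>V. (if u = w then real (card {w \<in> V. E u w}) * F v w else 0)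
           + (if E u w then - F v w else 0))"
      by (rule sum.cong) (auto simp: Lp_def irr)
    also have "\<dots> = real (card {w \<in> V. E u w}) * F v u - (\<Sum>w\<in>{w\<in>V. E u w}. F v w)"
      using fin u by (simp add: sum.distrib sum.If_cases sum_negf) (simp add: Int_def)
    also have "\<dots> = (\<Sum>w\<in>{w\<in>V. E u w}. F v u - F v w)"
      by (simp add: sum_subtractf)
    finally show ?thesis using eig[OF u v] by simp
  qed
  have AP: "A * P = P * D"
  proof (rule eq_matI)
    fix r c assume r: "r < dim_row (P * D)" and c: "c < dim_col (P * D)"
    hence r': "r < n" and c': "c < n" using Pc Dc by auto
    have "(A * P) $$ (r, c) = (\<Sum>t<n. A $$ (r,t) * P $$ (t,c))"
      using r' c' Ac Pc by (simp add: scalar_prod_def lessThan_atLeast0)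
    also have "\<dots> = (\<Sum>t<n. Lp (vs ! r) (vs ! t) * F (vs ! c) (vs ! t))"
      by (rule sum.cong) (use r' c' vsinj in \<open>auto simp: A P_def Lp_def\<close>)
    also have "\<dots> = (\<Sum>w\<in>V. Lp (vs ! r) w * F (vs ! c) w)"
      using sum_nth_distinct[OF dvs, of "\<lambda>w. Lp (vs ! r) w * F (vs ! c) w"] svs n_def by simp
    also have "\<dots> = \<Lambda> (vs ! c) * F (vs ! c) (vs ! r)" using Lrow vsV r' c' by simp
    also have "\<dots> = (P * D) $$ (r, c)"
    proof -
      have "(P * D) $$ (r, c) = (\<Sum>t<n. P $$ (r,t) * D $$ (t,c))"
        using r' c' Dc Pc by (simp add: scalar_prod_def lessThan_atLeast0)
      also have "\<dots> = (\<Sum>t<n. if t = c then P $$ (r,c) * lam c else 0)"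
        by (rule sum.cong) (use r' c' in \<open>auto simp: D_def\<close>)
      also have "\<dots> = P $$ (r,c) * lam c" using c' by simp
      finally show ?thesis using r' c' by (simp add: P_def lam_def)
    qed
    finally show "(A * P) $$ (r, c) = (P * D) $$ (r, c)" .
  qed (use Ac Pc Dc in auto)
  have dP: "det P \<noteq> 0"
  proof -
    define M where "M = transpose_mat P * P"
    have Mc: "M \<in> carrier_mat n n" unfolding M_def using Pc by auto
    have Mij: "M $$ (i,j) = (\<Sum>w\<in>V. F (vs ! i) w * F (vs ! j) w)" if "i < n" "j < n" for i j
    proof -
      have "M $$ (i,j) = (\<Sum>t<n. F (vs ! i) (vs ! t) * F (vs ! j) (vs ! t))"
        using that Pc by (simp add: M_def scalar_prod_def lessThan_atLeast0 P_def)
      also have "\<dots> = (\<Sum>w\<in>V. F (vs ! i) w * F (vs ! j) w)"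
        using sum_nth_distinct[OF dvs, of "\<lambda>w. F (vs ! i) w * F (vs ! j) w"] svs n_def by simp
      finally show ?thesis .
    qed
    have ut: "upper_triangular M"
    proof (unfold upper_triangular_def, intro allI impI)
      fix i j assume "i < dim_row M" "j < i"
      then have ij: "i < n" "j < n" "j \<noteq> i" using Mc by auto
      have "vs ! i \<noteq> vs ! j" using vsinj[OF ij(1,2)] ij(3) by auto
      then show "M $$ (i, j) = 0" using Mij[OF ij(1,2)] orth[OF vsV[OF ij(1)] vsV[OF ij(2)]] by simp
    qed
    have pos: "(\<Sum>w\<in>V. F v w * F v w) > 0" if "v \<in> V" for v
    proof -
      have "F v v * F v v \<le> (\<Sum>w\<in>V. F v w * F v w)"
        by (rule member_le_sum) (use that fin in auto)
      moreover have "F v v * F v v > 0" using nz[OF that] not_real_square_gt_zero[of "F v v"] by blast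
      ultimately show ?thesis by linarith
    qed
    have "det M = prod_list (diag_mat M)" by (rule det_upper_triangular[OF ut Mc])
    also have "\<dots> \<noteq> 0"
    proof
      assume "prod_list (diag_mat M) = 0"
      then have "0 \<in> set (diag_mat M)" by (simp add: prod_list_zero_iff)
      then obtain i where i: "i < n" "M $$ (i,i) = 0" using Mc by (auto simp: diag_mat_def)
      show False using pos[OF vsV[OF i(1)]] Mij[OF i(1) i(1)] i(2) by simp
    qed
    finally have "det M \<noteq> 0" .
    moreover have "det M = det (transpose_mat P) * det P"
      unfolding M_def by (rule det_mult) (use Pc in auto)
    moreover have "det (transpose_mat P) = det P" by (rule det_transpose[OF Pc])
    ultimately show ?thesis by auto
  qed
  have cp: "char_poly A = (\<Prod>a\<leftarrow>map lam [0..<n]. [:- a, 1:])"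
    by (rule charpoly_eigbasis[OF Ac Pc _ dP]) (use AP in \<open>simp only: D_def\<close>)
  have ml: "map lam [0..<n] = map \<Lambda> vs"
    by (rule nth_equalityI) (auto simp: lam_def n_def)
  have "laplacian_eigenvalues V E = sorted_list_of_multiset (proots (char_poly A))"
    by (simp only: laplacian_eigenvalues_def A_def)
  also have "\<dots> = sort (map \<Lambda> vs)"
    by (simp only: cp proots_eig sorted_list_of_multiset_mset ml)
  finally show ?thesis by (simp only: vs_def)
qed




locale GG =
  fixes k \<alpha> :: nat
  assumes k4: "k \<ge> 4" and evk: "even k" and a1: "\<alpha> \<ge> 1"
begin

definition "V = {(i,j). i < k \<and> j < \<alpha> + i}"
definition "adj u v = (u \<noteq> v \<and> u \<in> V \<and> v \<in> V \<and>
   (if fst u = fst v then even (fst u) else odd (max (fst u) (fst v))))"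
definition sz :: "nat \<Rightarrow> real" where "sz b = real (\<alpha> + b)"
definition Nn :: "nat \<Rightarrow> real" where "Nn i = (\<Sum>b<i. sz b)"
definition Ee :: "nat \<Rightarrow> real" where "Ee i = (\<Sum>b\<in>{i<..<k}. if odd b then sz b else 0)"
definition G :: "nat \<Rightarrow> nat \<Rightarrow> real" where
  "G t b = (if t = 0 then 1 else if b < t then sz t else if b = t then - Nn t else 0)"
definition hh :: "nat \<Rightarrow> nat \<Rightarrow> real" where
  "hh j y = (if y < j then 1 else if y = j then - real j else 0)"
definition F :: "nat \<times> nat \<Rightarrow> nat \<times> nat \<Rightarrow> real" where
  "F v w = (if snd v = 0 then G (fst v) (fst w) else if fst w = fst v then hh (snd v) (snd w) else 0)"
definition Lam :: "nat \<times> nat \<Rightarrow> real" where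
  "Lam v = (if snd v = 0 then (if fst v = 0 then 0 else (if odd (fst v) then Nn (fst v + 1) else 0) + Ee (fst v))
            else (if odd (fst v) then Nn (fst v) else sz (fst v)) + Ee (fst v))"

lemma finV: "finite V"
proof -
  have "V \<subseteq> {..<k} \<times> {..<\<alpha> + k}" unfolding V_def by auto
  then show ?thesis by (rule finite_subset) auto
qed

lemma V_Sigma: "V = Sigma {..<k} (\<lambda>b. {..<\<alpha> + b})"
  unfolding V_def by auto

lemma sumV: "(\<Sum>w\<in>V. g w) = (\<Sum>b<k. \<Sum>y<\<alpha> + b. g (b, y))"
  unfolding V_Sigma by (simp add: sum.Sigma)

lemma sumN:
  assumes u: "(a, x) \<in> V"
  shows "(\<Sum>w\<in>{w\<in>V. adj (a,x) w}. g w) =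
    (\<Sum>b\<in>{..<k}-{a}. if odd (max a b) then (\<Sum>y<\<alpha> + b. g (b, y)) else 0)
    + (if even a then (\<Sum>y\<in>{..<\<alpha> + a}-{x}. g (a, y)) else 0)"
proof -
  have ak: "a < k" and xa: "x < \<alpha> + a" using u unfolding V_def by auto
  have "(\<Sum>w\<in>{w\<in>V. adj (a,x) w}. g w) = (\<Sum>w\<in>V. if adj (a,x) w then g w else 0)"
    using finV by (simp add: sum.inter_filter)
  also have "\<dots> = (\<Sum>b<k. \<Sum>y<\<alpha> + b. if adj (a,x) (b,y) then g (b,y) else 0)"
    by (rule sumV)
  also have "\<dots> = (\<Sum>y<\<alpha> + a. if adj (a,x) (a,y) then g (a,y) else 0) +
      (\<Sum>b\<in>{..<k}-{a}. \<Sum>y<\<alpha> + b. if adj (a,x) (b,y) then g (b,y) else 0)"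
    using ak by (simp add: sum.remove)
  also have "(\<Sum>y<\<alpha> + a. if adj (a,x) (a,y) then g (a,y) else 0)
      = (if even a then (\<Sum>y\<in>{..<\<alpha> + a}-{x}. g (a, y)) else 0)"
  proof (cases "even a")
    case True
    have "(\<Sum>y<\<alpha> + a. if adj (a,x) (a,y) then g (a,y) else 0) = (\<Sum>y<\<alpha> + a. if y \<noteq> x then g (a,y) else 0)"
      by (rule sum.cong) (use u True in \<open>auto simp: adj_def V_def\<close>)
    also have "\<dots> = (\<Sum>y\<in>{..<\<alpha> + a}-{x}. g (a, y))"
      by (simp add: sum.If_cases Diff_eq Int_def Compl_eq)
    finally show ?thesis using True by simp
  next
    case False
    then show ?thesis by (auto simp: adj_def intro!: sum.neutral)
  qed
  also have "(\<Sum>b\<in>{..<k}-{a}. \<Sum>y<\<alpha> + b. if adj (a,x) (b,y) then g (b,y) else 0) =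
     (\<Sum>b\<in>{..<k}-{a}. if odd (max a b) then (\<Sum>y<\<alpha> + b. g (b, y)) else 0)"
    by (rule sum.cong) (use u in \<open>auto simp: adj_def V_def intro!: sum.cong\<close>)
  finally show ?thesis by (simp only: add.commute)
qed

lemma hh_sum: assumes "j < m" shows "(\<Sum>y<m. hh j y) = 0"
proof -
  obtain d where m: "m = Suc j + d" using assms by (metis less_iff_Suc_add add_Suc)
  have "(\<Sum>y<Suc j + d. hh j y) = 0"
  proof (induction d)
    case 0
    have "(\<Sum>y<Suc j. hh j y) = (\<Sum>y<j. hh j y) + hh j j" by simp
    also have "(\<Sum>y<j. hh j y) = (\<Sum>y<j. 1)" by (rule sum.cong) (auto simp: hh_def)
    finally show ?case by (simp add: hh_def)
  next
    case (Suc d)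
    then show ?case by (simp add: hh_def)
  qed
  then show ?thesis using m by simp
qed

lemma hh_prod_sum: assumes "j < j'" "j' < m" shows "(\<Sum>y<m. hh j y * hh j' y) = 0"
proof -
  have "(\<Sum>y<m. hh j y * hh j' y) = (\<Sum>y<m. hh j y)"
    by (rule sum.cong) (use assms in \<open>auto simp: hh_def\<close>)
  then show ?thesis using hh_sum assms by simp
qed

lemma Nn_Suc: "Nn (Suc i) = Nn i + sz i" by (simp add: Nn_def)

lemma sz_pos: "sz b > 0" using a1 by (simp add: sz_def)

lemma sum_blockconst: "(\<Sum>w\<in>V. c (fst w)) = (\<Sum>b<k. sz b * c b)"
  by (simp add: sumV sz_def)

lemma Gsum': assumes "1 \<le> t" "t < m" shows "(\<Sum>b<m. sz b * G t b) = 0"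
proof -
  have "(\<Sum>b<m. sz b * G t b) = (\<Sum>b<Suc t. sz b * G t b)"
    by (rule sum.mono_neutral_right) (use assms in \<open>auto simp: G_def\<close>)
  also have "\<dots> = (\<Sum>b<t. sz b * G t b) + sz t * G t t" by simp
  also have "(\<Sum>b<t. sz b * G t b) = (\<Sum>b<t. sz b) * sz t"
    by (simp add: sum_distrib_right G_def assms)
  finally show ?thesis using assms by (simp add: G_def Nn_def)
qed

lemma Gsum: assumes "1 \<le> t" "t < k" shows "(\<Sum>b<k. sz b * G t b) = 0"
  using Gsum'[OF assms] .

lemma GG_sum: assumes "t < t'" "t' < k" shows "(\<Sum>b<k. sz b * G t b * G t' b) = 0"
proof (cases "t = 0")
  case True
  then show ?thesis using Gsum[of t'] assms by (simp add: G_def)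
next
  case False
  have "(\<Sum>b<k. sz b * G t b * G t' b) = (\<Sum>b<k. sz b * G t b) * sz t'"
    unfolding sum_distrib_right by (rule sum.cong) (use assms False in \<open>auto simp: G_def\<close>)
  then show ?thesis using Gsum[of t] assms False by simp
qed

lemma orth_QQ: assumes "t \<noteq> t'" "t < k" "t' < k"
  shows "(\<Sum>w\<in>V. G t (fst w) * G t' (fst w)) = 0"
proof -
  have "(\<Sum>w\<in>V. G t (fst w) * G t' (fst w)) = (\<Sum>b<k. sz b * G t b * G t' b)"
    using sum_blockconst[of "\<lambda>b. G t b * G t' b"] by (simp add: mult.assoc)
  also have "\<dots> = 0"
  proof (cases "t < t'")
    case True then show ?thesis using GG_sum assms by simp
  next
    case False
    then have "(\<Sum>b<k. sz b * G t' b * G t b) = 0" using GG_sum[of t' t] assms by simp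
    then show ?thesis by (simp add: mult_ac)
  qed
  finally show ?thesis .
qed

lemma orth_QH: assumes "t' < k" "j' < \<alpha> + t'"
  shows "(\<Sum>w\<in>V. G t (fst w) * (if fst w = t' then hh j' (snd w) else 0)) = 0"
proof -
  have "(\<Sum>w\<in>V. G t (fst w) * (if fst w = t' then hh j' (snd w) else 0))
     = (\<Sum>b<k. if b = t' then G t t' * (\<Sum>y<\<alpha> + b. hh j' y) else 0)"
    unfolding sumV by (rule sum.cong) (auto simp: sum_distrib_left)
  also have "\<dots> = 0" using assms hh_sum by simp
  finally show ?thesis .
qed

lemma orth_HH: assumes "(t,j) \<noteq> (t',j')" "t < k" "t' < k" "j < \<alpha> + t" "j' < \<alpha> + t'"
  shows "(\<Sum>w\<in>V. (if fst w = t then hh j (snd w) else 0) * (if fst w = t' then hh j' (snd w) else 0)) = 0"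
proof (cases "t = t'")
  case False
  then show ?thesis by (auto intro!: sum.neutral)
next
  case True
  then have jj: "j \<noteq> j'" using assms by auto
  have "(\<Sum>w\<in>V. (if fst w = t then hh j (snd w) else 0) * (if fst w = t' then hh j' (snd w) else 0))
     = (\<Sum>b<k. if b = t then (\<Sum>y<\<alpha> + t. hh j y * hh j' y) else 0)"
    unfolding sumV by (rule sum.cong) (auto simp: True)
  also have "\<dots> = (\<Sum>y<\<alpha> + t. hh j y * hh j' y)" using assms by simp
  also have "\<dots> = 0"
  proof (cases "j < j'")
    case True then show ?thesis using hh_prod_sum assms \<open>t = t'\<close> by simp
  next
    case False
    then have "(\<Sum>y<\<alpha> + t. hh j' y * hh j y) = 0" using hh_prod_sum[of j' j] assms jj \<open>t = t'\<close> by simp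
    then show ?thesis by (simp add: mult_ac)
  qed
  finally show ?thesis .
qed

lemma orth: assumes "v \<in> V" "v' \<in> V" "v \<noteq> v'" shows "(\<Sum>w\<in>V. F v w * F v' w) = 0"
proof -
  obtain t j t' j' where v: "v = (t,j)" and v': "v' = (t',j')" by fastforce
  have tk: "t < k" "t' < k" "j < \<alpha> + t" "j' < \<alpha> + t'" using assms unfolding v v' V_def by auto
  consider "j = 0" "j' = 0" | "j = 0" "j' \<noteq> 0" | "j \<noteq> 0" "j' = 0" | "j \<noteq> 0" "j' \<noteq> 0" by blast
  then show ?thesis
  proof cases
    case 1 then show ?thesis using orth_QQ[of t t'] tk assms unfolding v v' F_def by simp
  next
    case 2
    have e1: "F v w = G t (fst w)" for w using 2 by (simp add: v F_def)
    have e2: "F v' w = (if fst w = t' then hh j' (snd w) else 0)" for w using 2 by (simp add: v' F_def)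
    show ?thesis unfolding e1 e2 using orth_QH[of t' j' t] tk by simp
  next
    case 3
    then have "(\<Sum>w\<in>V. G t' (fst w) * (if fst w = t then hh j (snd w) else 0)) = 0"
      using orth_QH[of t j t'] tk by simp
    moreover have e1: "F v' w = G t' (fst w)" for w using 3 by (simp add: v' F_def)
    moreover have e2: "F v w = (if fst w = t then hh j (snd w) else 0)" for w using 3 by (simp add: v F_def)
    ultimately show ?thesis by (simp add: mult.commute)
  next
    case 4
    have e1: "F v w = (if fst w = t then hh j (snd w) else 0)" for w using 4 by (simp add: v F_def)
    have e2: "F v' w = (if fst w = t' then hh j' (snd w) else 0)" for w using 4 by (simp add: v' F_def)
    show ?thesis unfolding e1 e2 using orth_HH[of t j t' j'] tk assms v v' by simp
  qed
qed

lemma Nn_pos: "t \<ge> 1 \<Longrightarrow> Nn t > 0"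
  unfolding Nn_def by (rule sum_pos2[of _ 0]) (use sz_pos in \<open>auto intro: less_imp_le\<close>)

lemma nz: "v \<in> V \<Longrightarrow> F v v \<noteq> 0"
  using Nn_pos[of "fst v"] by (cases v) (auto simp: F_def G_def hh_def)

lemma split_a: assumes "a < k"
  shows "(\<Sum>b\<in>{..<k}-{a}. \<phi> b) = (\<Sum>b<a. \<phi> b) + (\<Sum>b\<in>{a<..<k}. \<phi> b)"
proof -
  have "{..<k}-{a} = {..<a} \<union> {a<..<k}" using assms by auto
  moreover have "sum \<phi> ({..<a} \<union> {a<..<k}) = sum \<phi> {..<a} + sum \<phi> {a<..<k}"
    by (rule sum.union_disjoint) auto
  ultimately show ?thesis by simp
qed

lemma split_t: assumes "a < t" "t < k"
  shows "(\<Sum>b\<in>{a<..<k}. \<phi> b) = (\<Sum>b\<in>{a<..<t}. \<phi> b) + \<phi> t + (\<Sum>b\<in>{t<..<k}. \<phi> b)"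
proof -
  have "{a<..<k} = {a<..<t} \<union> ({t} \<union> {t<..<k})" using assms by auto
  moreover have "(\<Sum>b\<in>{a<..<t} \<union> ({t} \<union> {t<..<k}). \<phi> b) = (\<Sum>b\<in>{a<..<t}. \<phi> b) + (\<phi> t + (\<Sum>b\<in>{t<..<k}. \<phi> b))"
    by (subst sum.union_disjoint) (auto simp: sum.union_disjoint)
  ultimately show ?thesis by (simp add: add.assoc)
qed

lemma Dsum: assumes "a < k"
  shows "(\<Sum>b\<in>{..<k}-{a}. if odd (max a b) then sz b * c else 0) = ((if odd a then Nn a else 0) + Ee a) * c"
proof -
  have "(\<Sum>b<a. if odd (max a b) then sz b * c else 0) = (if odd a then Nn a else 0) * c"
    by (auto simp: Nn_def sum_distrib_right max_def intro!: sum.cong)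
  moreover have "(\<Sum>b\<in>{a<..<k}. if odd (max a b) then sz b * c else 0) = Ee a * c"
    by (auto simp: Ee_def sum_distrib_right max_def intro!: sum.cong)
  moreover have "(\<Sum>b\<in>{..<k}-{a}. if odd (max a b) then sz b * c else 0) =
     (\<Sum>b<a. if odd (max a b) then sz b * c else 0) + (\<Sum>b\<in>{a<..<k}. if odd (max a b) then sz b * c else 0)"
    by (rule split_a[OF assms])
  ultimately show ?thesis by (simp add: distrib_right)
qed

lemma eig_Q:
  assumes u: "(a, x) \<in> V" and t: "t < k"
  shows "(\<Sum>b\<in>{..<k}-{a}. if odd (max a b) then sz b * (G t a - G t b) else 0)
     = Lam (t, 0) * G t a"
proof (cases "t = 0")
  case True
  then have "G t b = 1" for b by (simp add: G_def)
  then show ?thesis using True by (simp add: Lam_def cong: if_cong)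
next
  case False
  have ak: "a < k" using u by (simp add: V_def)
  define \<phi> where "\<phi> = (\<lambda>b. if odd (max a b) then sz b * (G t a - G t b) else 0)"
  have sp: "(\<Sum>b\<in>{..<k}-{a}. \<phi> b) = (\<Sum>b<a. \<phi> b) + (\<Sum>b\<in>{a<..<k}. \<phi> b)"
    by (rule split_a[OF ak])
  consider "t < a" | "a = t" | "a < t" by linarith
  then have "(\<Sum>b\<in>{..<k}-{a}. \<phi> b) = Lam (t, 0) * G t a"
  proof cases
    case 1
    have "(\<Sum>b<a. \<phi> b) = (if odd a then - (\<Sum>b<a. sz b * G t b) else 0)"
      using 1 False by (auto simp: \<phi>_def max_def G_def sum_negf[symmetric] intro!: sum.cong)
    also have "\<dots> = 0" using Gsum'[of t a] 1 False by simp
    finally have A: "(\<Sum>b<a. \<phi> b) = 0" .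
    have B: "(\<Sum>b\<in>{a<..<k}. \<phi> b) = 0"
      using 1 by (auto simp: \<phi>_def G_def intro!: sum.neutral)
    show ?thesis using sp A B 1 False by (simp add: G_def)
  next
    case 2
    have A0: "(\<Sum>b<a. \<phi> b) = (if odd t then (\<Sum>b<t. sz b * (- Nn t - sz t)) else 0)"
      using 2 False by (auto simp: \<phi>_def max_def G_def intro!: sum.cong)
    have A: "(\<Sum>b<a. \<phi> b) = (if odd t then - Nn t * Nn (t+1) else 0)"
    proof -
      have "(\<Sum>b<t. sz b * (- Nn t - sz t)) = Nn t * (- Nn t - sz t)" by (simp add: Nn_def sum_distrib_right)
      then show ?thesis unfolding A0 by (simp add: Nn_Suc algebra_simps)
    qed
    have B: "(\<Sum>b\<in>{a<..<k}. \<phi> b) = - Nn t * Ee t"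
      using 2 False by (auto simp: \<phi>_def max_def G_def Ee_def sum_distrib_left intro!: sum.cong)
    show ?thesis using sp A B 2 False by (auto simp: G_def Lam_def Nn_Suc algebra_simps split: if_splits)
  next
    case 3
    have A: "(\<Sum>b<a. \<phi> b) = 0"
      using 3 by (auto simp: \<phi>_def G_def intro!: sum.neutral)
    have sp2: "(\<Sum>b\<in>{a<..<k}. \<phi> b) = (\<Sum>b\<in>{a<..<t}. \<phi> b) + \<phi> t + (\<Sum>b\<in>{t<..<k}. \<phi> b)"
      by (rule split_t[OF 3 t])
    have B1: "(\<Sum>b\<in>{a<..<t}. \<phi> b) = 0"
      using 3 by (auto simp: \<phi>_def G_def intro!: sum.neutral)
    have B2: "(\<Sum>b\<in>{t<..<k}. \<phi> b) = Ee t * sz t"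
      using 3 False by (auto simp: \<phi>_def max_def G_def Ee_def sum_distrib_right intro!: sum.cong)
    have B3: "\<phi> t = (if odd t then Nn (t+1) * sz t else 0)"
      using 3 False by (auto simp: \<phi>_def max_def G_def Nn_Suc algebra_simps)
    show ?thesis using sp sp2 A B1 B2 B3 3 False
      by (auto simp: G_def Lam_def Nn_Suc algebra_simps split: if_splits)
  qed
  then show ?thesis by (simp add: \<phi>_def)
qed

lemma eig:
  assumes u: "u \<in> V" and v: "v \<in> V"
  shows "(\<Sum>w\<in>{w\<in>V. adj u w}. F v u - F v w) = Lam v * F v u"
proof -
  obtain a x t j where uu: "u = (a,x)" and vv: "v = (t,j)" by fastforce
  have ak: "a < k" "x < \<alpha> + a" and tk: "t < k" "j < \<alpha> + t" using u v uu vv by (auto simp: V_def)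
  have N: "(\<Sum>w\<in>{w\<in>V. adj u w}. F v u - F v w) =
    (\<Sum>b\<in>{..<k}-{a}. if odd (max a b) then (\<Sum>y<\<alpha> + b. F v (a,x) - F v (b, y)) else 0)
    + (if even a then (\<Sum>y\<in>{..<\<alpha> + a}-{x}. F v (a,x) - F v (a, y)) else 0)"
    using sumN[of a x "\<lambda>w. F v (a,x) - F v w"] u uu by simp
  show ?thesis
  proof (cases "j = 0")
    case True
    have Fe: "F v w = G t (fst w)" for w using True by (simp add: vv F_def)
    have "(\<Sum>w\<in>{w\<in>V. adj u w}. F v u - F v w) =
       (\<Sum>b\<in>{..<k}-{a}. if odd (max a b) then sz b * (G t a - G t b) else 0)"
    proof -
      have S0: "(\<Sum>y\<in>{..<\<alpha> + a}-{x}. F v (a,x) - F v (a, y)) = 0" by (simp add: Fe)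
      have C0: "(\<Sum>b\<in>{..<k}-{a}. if odd (max a b) then (\<Sum>y<\<alpha> + b. F v (a,x) - F v (b, y)) else 0)
        = (\<Sum>b\<in>{..<k}-{a}. if odd (max a b) then sz b * (G t a - G t b) else 0)"
        by (rule sum.cong) (simp_all add: Fe sz_def)
      show ?thesis using N S0 C0 by simp
    qed
    also have "\<dots> = Lam (t, 0) * G t a" by (rule eig_Q) (use u uu tk in auto)
    moreover have "Lam v = Lam (t,0)" using vv True by simp
    moreover have "F v u = G t a" using Fe uu by simp
    ultimately show ?thesis by simp
  next
    case False
    have Fe: "F v w = (if fst w = t then hh j (snd w) else 0)" for w using False by (simp add: vv F_def)
    show ?thesis
    proof (cases "a = t")
      case True
      have C: "(\<Sum>b\<in>{..<k}-{a}. if odd (max a b) then (\<Sum>y<\<alpha> + b. F v (a,x) - F v (b, y)) else 0)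
          = (\<Sum>b\<in>{..<k}-{a}. if odd (max a b) then sz b * hh j x else 0)"
        by (rule sum.cong) (use True in \<open>auto simp: Fe sz_def\<close>)
      have S: "(\<Sum>y\<in>{..<\<alpha> + a}-{x}. F v (a,x) - F v (a, y)) = sz t * hh j x"
      proof -
        have "(\<Sum>y\<in>{..<\<alpha> + a}-{x}. F v (a,x) - F v (a, y)) = (\<Sum>y\<in>{..<\<alpha> + a}-{x}. hh j x - hh j y)"
          unfolding Fe using True by simp
        also have "\<dots> = real (\<alpha> + a - 1) * hh j x - ((\<Sum>y<\<alpha> + a. hh j y) - hh j x)"
          using ak by (simp add: sum_subtractf sum_diff1)
        also have "\<dots> = sz t * hh j x" using hh_sum[of j "\<alpha> + a"] tk True ak
          by (simp add: sz_def of_nat_diff algebra_simps)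
        finally show ?thesis .
      qed
      have Fu: "F (t,j) (t,x) = hh j x" using Fe[of "(t,x)"] vv by simp
      show ?thesis unfolding N C Dsum[OF ak(1)] using S True False
        by (auto simp: Lam_def vv uu Fu algebra_simps)
    next
      case ne: False
      have C: "(\<Sum>b\<in>{..<k}-{a}. if odd (max a b) then (\<Sum>y<\<alpha> + b. F v (a,x) - F v (b, y)) else 0) = 0"
      proof (rule sum.neutral, intro ballI)
        fix b assume "b \<in> {..<k}-{a}"
        show "(if odd (max a b) then (\<Sum>y<\<alpha> + b. F v (a,x) - F v (b, y)) else 0) = 0"
        proof (cases "b = t")
          case True
          then show ?thesis using ne hh_sum[of j "\<alpha> + t"] tk by (simp add: Fe sum_negf)
        next
          case False
          then show ?thesis using ne by (simp add: Fe)
        qed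
      qed
      show ?thesis unfolding N C using ne by (simp add: Fe uu)
    qed
  qed
qed

end



context GG begin

definition "asl = map (\<lambda>i. \<alpha> + i) [0..<k]"

lemma Cverts_as: "Cverts asl = V"
  unfolding Cverts_def V_def asl_def by auto

lemma Cadj_as: "Cadj asl u v \<longleftrightarrow> adj u v"
proof -
  have ne: "rev asl \<noteq> []" using k4 by (simp add: asl_def)
  have len: "length (rev asl) = k" by (simp add: asl_def)
  have "Cadj asl u v \<longleftrightarrow> u \<noteq> v \<and> u \<in> V \<and> v \<in> V \<and>
     (if fst u = fst v then even (k - fst u) else odd (k - max (fst u) (fst v)))"
    unfolding Cadj_def Cadj_rev_char[OF ne] len using Cverts_as by simp
  also have "\<dots> \<longleftrightarrow> adj u v"
  proof -
    have "u \<in> V \<Longrightarrow> v \<in> V \<Longrightarrow> fst u < k \<and> fst v < k" unfolding V_def by auto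
    then show ?thesis unfolding adj_def using evk
      by (auto simp: max_def even_diff_nat split: if_splits)
  qed
  finally show ?thesis .
qed

lemma spectrum: "laplacian_eigenvalues V adj = sort (map Lam (sorted_list_of_set V))"
  by (rule laplacian_spectrum[OF finV _ eig orth nz]) (auto simp: adj_def)

lemma Ee_nonneg: "Ee t \<ge> 0"
  unfolding Ee_def by (rule sum_nonneg) (use sz_pos in \<open>auto intro: less_imp_le\<close>)

lemma Nn_nonneg: "Nn t \<ge> 0"
  unfolding Nn_def by (rule sum_nonneg) (use sz_pos in \<open>auto intro: less_imp_le\<close>)

lemma Ee_ge: assumes "t < k - 1" shows "Ee t \<ge> sz (k - 1)"
proof -
  have "odd (k - 1)" using evk k4 by simp
  then have "sz (k - 1) = (if odd (k - 1) then sz (k - 1) else 0)" by simp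
  also have "\<dots> \<le> Ee t" unfolding Ee_def
    by (rule member_le_sum[of "k - 1"]) (use assms k4 sz_pos in \<open>auto intro: less_imp_le\<close>)
  finally show ?thesis .
qed

lemma Nn_ge: assumes "b < i" shows "Nn i \<ge> sz b"
  unfolding Nn_def by (rule member_le_sum) (use assms sz_pos in \<open>auto intro: less_imp_le\<close>)

lemma Nn_km1: "Nn (k - 1) \<ge> sz (k - 1)"
proof -
  have "sz 0 + sz (k - 2) = (\<Sum>b\<in>{0, k-2}. sz b)" using k4 by simp
  also have "\<dots> \<le> Nn (k - 1)" unfolding Nn_def
    by (rule sum_mono2) (use k4 sz_pos in \<open>auto intro: less_imp_le\<close>)
  finally show ?thesis using a1 k4 by (simp add: sz_def)
qed

lemma Lam_rest: assumes "v \<in> V" "v \<noteq> (0,0)" shows "Lam v \<ge> sz (k - 1)"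
proof -
  obtain t j where v: "v = (t,j)" by fastforce
  have tk: "t < k" using assms v by (simp add: V_def)
  show ?thesis
  proof (cases "t < k - 1")
    case True
    then have "Ee t \<ge> sz (k - 1)" by (rule Ee_ge)
    then show ?thesis using assms v Nn_nonneg[of "Suc t"] Nn_nonneg[of t] sz_pos[of t]
      by (auto simp: Lam_def)
  next
    case False
    then have t: "t = k - 1" using tk by simp
    have ot: "odd t" using t evk k4 by simp
    have "Nn (t + 1) \<ge> sz (k - 1)" using Nn_ge[of "k-1" "t+1"] t by simp
    then show ?thesis using assms v t ot Nn_km1 Ee_nonneg[of t] k4 by (auto simp: Lam_def)
  qed
qed

lemma Lam_v1: "Lam (k - 2, 0) = sz (k - 1)"
proof -
  have "{k-2<..<k} = {k - 1}" using k4 by auto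
  moreover have "odd (k - 1)" "even (k - 2)" "k - 2 \<noteq> 0" using evk k4 by auto
  ultimately show ?thesis by (simp add: Lam_def Ee_def)
qed

lemma alg: "alg_conn V adj = real (\<alpha> + k - 1)"
proof -
  have "alg_conn V adj = sort (map Lam (sorted_list_of_set V)) ! 1"
    unfolding alg_conn_def spectrum ..
  also have "\<dots> = sz (k - 1)"
  proof (rule sort_second)
    show "distinct (sorted_list_of_set V)" by simp
    show "(0,0) \<in> set (sorted_list_of_set V)" using finV a1 k4 by (simp add: V_def)
    show "(k-2,0) \<in> set (sorted_list_of_set V)" using finV a1 k4 by (simp add: V_def)
    show "((0::nat),(0::nat)) \<noteq> (k-2,0)" using k4 by simp
    show "Lam (0,0) \<le> sz (k - 1)" using sz_pos[of "k-1"] by (simp add: Lam_def)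
    show "Lam (k-2,0) = sz (k-1)" by (rule Lam_v1)
    show "\<And>v. v \<in> set (sorted_list_of_set V) \<Longrightarrow> v \<noteq> (0,0) \<Longrightarrow> sz (k-1) \<le> Lam v"
      using Lam_rest finV by simp
  qed
  also have "\<dots> = real (\<alpha> + k - 1)" using k4 by (simp add: sz_def)
  finally show ?thesis .
qed

end



context GG begin

definition "cliques = {S. S \<subseteq> V \<and> (\<forall>u\<in>S. \<forall>v\<in>S. u \<noteq> v \<longrightarrow> adj u v)}"

lemma div2_lt: "odd (a::nat) \<Longrightarrow> a < k' \<Longrightarrow> even k' \<Longrightarrow> a div 2 < k' div 2"
  by presburger

lemma clique_bound: assumes S: "S \<in> cliques" shows "card S \<le> \<alpha> + k - 1"
proof -
  have SV: "S \<subseteq> V" and cl: "\<And>u v. u \<in> S \<Longrightarrow> v \<in> S \<Longrightarrow> u \<noteq> v \<Longrightarrow> adj u v"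
    using S by (auto simp: cliques_def)
  have finS: "finite S" using SV finV by (rule finite_subset)
  define Ev where "Ev = {w\<in>S. even (fst w)}"
  define Od where "Od = {w\<in>S. odd (fst w)}"
  have cardS: "card S = card Ev + card Od"
  proof -
    have e: "S = Ev \<union> Od" "Ev \<inter> Od = {}" unfolding Ev_def Od_def by auto
    have "finite Ev" "finite Od" using finS unfolding Ev_def Od_def by auto
    then have "card (Ev \<union> Od) = card Ev + card Od" using e(2) by (rule card_Un_disjoint)
    then show ?thesis using e(1) by simp
  qed
  have odd_inj: "inj_on (\<lambda>w. fst w div 2) Od"
  proof (rule inj_onI)
    fix u v assume u: "u \<in> Od" and v: "v \<in> Od" and eq: "fst u div 2 = fst v div 2"
    have "2 * (fst u div 2) + 1 = fst u" "2 * (fst v div 2) + 1 = fst v"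
      using u v unfolding Od_def by (auto intro: odd_two_times_div_two_succ)
    then have "fst u = fst v" using eq by linarith
    then show "u = v" using cl[of u v] u v unfolding Od_def adj_def by auto
  qed
  have fOd: "finite Od" using finS unfolding Od_def by simp
  have Odk: "w \<in> Od \<Longrightarrow> fst w < k" for w using SV unfolding Od_def V_def by auto
  show ?thesis
  proof (cases "Ev = {}")
    case True
    have "card Od \<le> card {..<k div 2}"
      by (rule card_inj_on_le[OF odd_inj]) (use Odk evk div2_lt in \<open>auto simp: Od_def\<close>)
    then show ?thesis using cardS True k4 by simp
  next
    case False
    then obtain e y where ey: "(e,y) \<in> Ev" by auto
    have ee: "even e" "e < k" using ey SV unfolding Ev_def V_def by auto
    have Evsub: "Ev \<subseteq> {e} \<times> {..<\<alpha> + e}"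
    proof
      fix w assume w: "w \<in> Ev"
      have "fst w = e"
      proof (rule ccontr)
        assume ne: "fst w \<noteq> e"
        then have "(e,y) \<noteq> w" by auto
        then have "adj (e,y) w" using cl[of "(e,y)" w] w ey unfolding Ev_def by auto
        then show False using ne w ee unfolding adj_def Ev_def by (auto simp: max_def split: if_splits)
      qed
      then show "w \<in> {e} \<times> {..<\<alpha> + e}" using w SV unfolding Ev_def V_def by (cases w) auto
    qed
    have cEv: "card Ev \<le> \<alpha> + e"
      using card_mono[OF _ Evsub] by simp
    have Odgt: "w \<in> Od \<Longrightarrow> e < fst w" for w
    proof -
      assume w: "w \<in> Od"
      have ne: "fst w \<noteq> e" using w ee unfolding Od_def by auto
      then have "(e,y) \<noteq> w" by auto
      then have "adj (e,y) w" using cl[of "(e,y)" w] w ey unfolding Ev_def Od_def by auto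
      then have "odd (max e (fst w))" using ne unfolding adj_def by auto
      then show "e < fst w" using ee ne by (auto simp: max_def split: if_splits)
    qed
    have "card Od \<le> card {e div 2..<k div 2}"
    proof (rule card_inj_on_le[OF odd_inj])
      show "(\<lambda>w. fst w div 2) ` Od \<subseteq> {e div 2..<k div 2}"
      proof
        fix z assume "z \<in> (\<lambda>w. fst w div 2) ` Od"
        then obtain w where w: "w \<in> Od" and z: "z = fst w div 2" by auto
        have "odd (fst w)" "e < fst w" "fst w < k" using w Odgt Odk unfolding Od_def by auto
        then show "z \<in> {e div 2..<k div 2}" using z ee evk
          by (auto elim!: oddE evenE)
      qed
    qed simp
    then have "card Od \<le> k div 2 - e div 2" by simp
    moreover have "e \<le> k - 2" using ee evk by (auto elim!: evenE)
    ultimately show ?thesis using cardS cEv ee evk k4 by (auto elim!: evenE)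
  qed
qed

lemma clique_big: "({k-2} \<times> {..<\<alpha> + (k - 2)} \<union> {(k-1, 0)}) \<in> cliques"
  using k4 evk a1 unfolding cliques_def adj_def V_def by (auto simp: max_def)

lemma card_big: "card ({k-2} \<times> {..<\<alpha> + (k - 2)} \<union> {(k-1, 0)}) = \<alpha> + k - 1"
  using k4 by (simp add: card_cartesian_product)

lemma clique: "clique_number V adj = \<alpha> + k - 1"
proof -
  have "clique_number V adj = Max (card ` cliques)"
    unfolding clique_number_def cliques_def ..
  also have "\<dots> = \<alpha> + k - 1"
  proof (rule Max_eqI)
    have "cliques \<subseteq> Pow V" unfolding cliques_def by auto
    then show "finite (card ` cliques)" using finV by (meson finite_Pow_iff finite_imageI finite_subset)
    show "\<And>y. y \<in> card ` cliques \<Longrightarrow> y \<le> \<alpha> + k - 1" using clique_bound by auto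
    show "\<alpha> + k - 1 \<in> card ` cliques" using clique_big card_big by (metis image_eqI)
  qed
  finally show ?thesis .
qed

end

theorem corollary5p6:
  fixes k \<alpha> :: nat
  assumes "k \<ge> 4" and "even k" and "\<alpha> \<ge> 1"
  defines "as \<equiv> map (\<lambda>i. \<alpha> + i) [0..<k]"
  shows "real (clique_number (Cverts as) (Cadj as)) = alg_conn (Cverts as) (Cadj as)
         \<and> alg_conn (Cverts as) (Cadj as) = real (\<alpha> + k - 1)"
proof -
  interpret GG k \<alpha> using assms(1-3) by unfold_locales auto
  have e: "as = asl" unfolding assms(4) asl_def ..
  have cv: "Cverts as = V" unfolding e by (rule Cverts_as)
  have ca: "Cadj as = adj" unfolding e by (rule ext, rule ext, rule Cadj_as)
  show ?thesis unfolding cv ca clique alg using assms(1) by simp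
qed

end
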